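(* Consider Algorithm 1 in the asynchronous model described in the context and assume $\delta\le\frac17$. Let $v,u$ be two nodes and let $T\ge T_s$. For $i\ge1$ let $f_i$ (respectively $g_i$) denote the $i$-th full frame of $v$ (respectively $u$) after $T$. Then some frame in $\{f_1,f_2\}$ together with some frame in $\{g_1,g_2\}$ forms an aligned pair, i.e., one of $(f_1,g_1),(f_1,g_2),(f_2,g_1),(f_2,g_2)$ is aligned.
   Context: Each node $u$ has a clock $C_u$ with $(1-\delta)\Delta t\le C_u(t+\Delta t)-C_u(t)\le(1+\delta)\Delta t$ for all real times $t$ and $\Delta t\ge0$; offsets between clocks are arbitrary. In Algorithm 1 each node, from its (arbitrary) start time, partitions its local time into consecutive frames of length $L$ as measured by its own clock, each frame divided into three consecutive slots of local length $L/3$; frames and slots are regarded as real-time intervals. $T_s$ is the real time by which all nodes have started. A full frame after $T$ is a frame starting at or after $T$. A pair of frames $(f,g)$ is aligned if at least one slot of $f$ lies completely within $g$ in real time. *)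

theory Defs
  imports Complex_Main
begin

definition drift_clock :: "real \<Rightarrow> (real \<Rightarrow> real) \<Rightarrow> bool" where
  "drift_clock \<delta> C \<longleftrightarrow> (\<forall>t \<Delta>. \<Delta> \<ge> 0 \<longrightarrow>
      (1 - \<delta>) * \<Delta> \<le> C (t + \<Delta>) - C t \<and> C (t + \<Delta>) - C t \<le> (1 + \<delta>) * \<Delta>)"

text \<open>The k-th frame (k = 0,1,...) of a node with clock C started at real time s,
  as a real-time interval: local times [C s + k L, C s + (k+1) L).\<close>
definition frame :: "(real \<Rightarrow> real) \<Rightarrow> real \<Rightarrow> real \<Rightarrow> nat \<Rightarrow> real set" where
  "frame C s L k = {t. C s + real k * L \<le> C t \<and> C t < C s + (real k + 1) * L}"

definition slot :: "(real \<Rightarrow> real) \<Rightarrow> real \<Rightarrow> real \<Rightarrow> nat \<Rightarrow> nat \<Rightarrow> real set" where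
  "slot C s L k j = {t. C s + real k * L + real j * L / 3 \<le> C t \<and>
                        C t < C s + real k * L + (real j + 1) * L / 3}"

definition aligned ::
  "(real \<Rightarrow> real) \<Rightarrow> real \<Rightarrow> nat \<Rightarrow> (real \<Rightarrow> real) \<Rightarrow> real \<Rightarrow> nat \<Rightarrow> real \<Rightarrow> bool" where
  "aligned C1 s1 k1 C2 s2 k2 L \<longleftrightarrow> (\<exists>j<3. slot C1 s1 L k1 j \<subseteq> frame C2 s2 L k2)"

definition full_frame_after :: "(real \<Rightarrow> real) \<Rightarrow> real \<Rightarrow> real \<Rightarrow> real \<Rightarrow> nat \<Rightarrow> bool" where
  "full_frame_after C s L T k \<longleftrightarrow> (\<forall>t \<in> frame C s L k. T \<le> t)"

text \<open>Index of the first full frame after T; the i-th full frame is then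
  frame number (first_full C s L T + (i - 1)), since frames are consecutive.\<close>
definition first_full :: "(real \<Rightarrow> real) \<Rightarrow> real \<Rightarrow> real \<Rightarrow> real \<Rightarrow> nat" where
  "first_full C s L T = (LEAST k. full_frame_after C s L T k)"

end

theory Submission
  imports Defs "HOL-Analysis.Analysis"
begin

lemma pure:
  fixes P Q :: "real \<Rightarrow> real" and L T :: real
  assumes L: "0 < L"
    and bP: "\<And>x y. x \<le> y \<Longrightarrow> 7/8*(y-x) \<le> P y - P x \<and> P y - P x \<le> 7/6*(y-x)"
    and bQ: "\<And>x y. x \<le> y \<Longrightarrow> 7/8*(y-x) \<le> Q y - Q x \<and> Q y - Q x \<le> 7/6*(y-x)"
    and P0: "T \<le> P 0" "P 0 < T + 7/6*L"
    and Q0: "T \<le> Q 0" "Q 0 < T + 7/6*L"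
  shows "\<exists>a::nat\<in>{0,1}. \<exists>b::nat\<in>{0,1}. \<exists>j::nat<3.
     Q (real b*L) \<le> P (real a*L + real j*L/3) \<and> P (real a*L + (real j+1)*L/3) \<le> Q (real b*L + L)"
proof -
  have p1: "7/8*(L/3) \<le> P (L/3) - P 0 \<and> P (L/3) - P 0 \<le> 7/6*(L/3)" using bP[of 0 "L/3"] L by simp
  have p2: "7/8*(L/3) \<le> P (2*L/3) - P (L/3) \<and> P (2*L/3) - P (L/3) \<le> 7/6*(L/3)" using bP[of "L/3" "2*L/3"] L by (simp add: field_simps)
  have p3: "7/8*(L/3) \<le> P L - P (2*L/3) \<and> P L - P (2*L/3) \<le> 7/6*(L/3)" using bP[of "2*L/3" L] L by (simp add: field_simps)
  have p4: "7/8*(L/3) \<le> P (L+L/3) - P L \<and> P (L+L/3) - P L \<le> 7/6*(L/3)" using bP[of L "L+L/3"] L by (simp add: field_simps)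
  have p5: "7/8*(L/3) \<le> P (L+2*L/3) - P (L+L/3) \<and> P (L+2*L/3) - P (L+L/3) \<le> 7/6*(L/3)" using bP[of "L+L/3" "L+2*L/3"] L by (simp add: field_simps)
  have q1: "7/8*L \<le> Q L - Q 0" using bQ[of 0 L] L by simp
  have q2: "7/8*L \<le> Q (L+L) - Q L" using bQ[of L "L+L"] L by simp
  show ?thesis
  proof (cases "Q 0 \<le> P 0")
    case True
    show ?thesis
    proof (cases "Q L \<le> P 0")
      case True
      have "Q (real 1*L) \<le> P (real 0*L + real 0*L/3) \<and> P (real 0*L + (real 0+1)*L/3) \<le> Q (real 1*L + L)"
        using True p1 q1 q2 P0 Q0 L by simp
      then show ?thesis by (intro bexI[where x="0::nat"] bexI[where x="1::nat"] exI[where x="0::nat"]) auto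
    next
      case F: False
      show ?thesis
      proof (cases "P (L/3) \<le> Q L")
        case True
        have "Q (real 0*L) \<le> P (real 0*L + real 0*L/3) \<and> P (real 0*L + (real 0+1)*L/3) \<le> Q (real 0*L + L)"
          using True \<open>Q 0 \<le> P 0\<close> by simp
        then show ?thesis by (intro bexI[where x="0::nat"] bexI[where x="0::nat"] exI[where x="0::nat"]) auto
      next
        case False
        have "Q (real 1*L) \<le> P (real 0*L + real 1*L/3) \<and> P (real 0*L + (real 1+1)*L/3) \<le> Q (real 1*L + L)"
          using False F p1 p2 q1 q2 L by simp
        then show ?thesis by (intro bexI[where x="0::nat"] bexI[where x="1::nat"] exI[where x="1::nat"]) auto
      qed
    qed
  next
    case F0: False
    show ?thesis
    proof (cases "Q 0 \<le> P (L/3)")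
      case True
      have "Q (real 0*L) \<le> P (real 0*L + real 1*L/3) \<and> P (real 0*L + (real 1+1)*L/3) \<le> Q (real 0*L + L)"
        using True F0 p1 p2 q1 L by simp
      then show ?thesis by (intro bexI[where x="0::nat"] bexI[where x="0::nat"] exI[where x="1::nat"]) auto
    next
      case F1: False
      show ?thesis
      proof (cases "Q 0 \<le> P (2*L/3)")
        case True
        have "Q (real 0*L) \<le> P (real 0*L + real 2*L/3) \<and> P (real 0*L + (real 2+1)*L/3) \<le> Q (real 0*L + L)"
          using True F1 p3 p2 q1 L by simp
        then show ?thesis by (intro bexI[where x="0::nat"] bexI[where x="0::nat"] exI[where x="2::nat"]) auto
      next
        case F2: False
        show ?thesis
        proof (cases "Q 0 \<le> P L")
          case True
          have "Q (real 0*L) \<le> P (real 1*L + real 0*L/3) \<and> P (real 1*L + (real 0+1)*L/3) \<le> Q (real 0*L + L)"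
            using True F2 p3 p4 q1 L by simp
          then show ?thesis by (intro bexI[where x="1::nat"] bexI[where x="0::nat"] exI[where x="0::nat"]) auto
        next
          case F3: False
          have "Q (real 0*L) \<le> P (real 1*L + real 1*L/3) \<and> P (real 1*L + (real 1+1)*L/3) \<le> Q (real 0*L + L)"
            using F3 p1 p2 p3 p4 p5 q1 L P0 Q0 by (simp add: field_simps)
          then show ?thesis by (intro bexI[where x="1::nat"] bexI[where x="0::nat"] exI[where x="1::nat"]) auto
        qed
      qed
    qed
  qed
qed


definition tau :: "(real \<Rightarrow> real) \<Rightarrow> real \<Rightarrow> real" where
  "tau C c = (SOME t. C t = c)"

locale clk =
  fixes \<delta> :: real and C :: "real \<Rightarrow> real"
  assumes d0: "0 \<le> \<delta>" and d1: "\<delta> \<le> 1/7" and dc: "drift_clock \<delta> C"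
begin

lemma lower: "t \<le> t' \<Longrightarrow> 6/7*(t'-t) \<le> C t' - C t"
proof -
  assume "t \<le> t'"
  then have "(1-\<delta>)*(t'-t) \<le> C t' - C t" using dc unfolding drift_clock_def
    by (metis add.commute diff_add_cancel diff_ge_0_iff_ge)
  moreover have "6/7*(t'-t) \<le> (1-\<delta>)*(t'-t)" using d1 \<open>t \<le> t'\<close> by (intro mult_right_mono) auto
  ultimately show ?thesis by linarith
qed

lemma upper: "t \<le> t' \<Longrightarrow> C t' - C t \<le> 8/7*(t'-t)"
proof -
  assume "t \<le> t'"
  then have "C t' - C t \<le> (1+\<delta>)*(t'-t)" using dc unfolding drift_clock_def
    by (metis add.commute diff_add_cancel diff_ge_0_iff_ge)
  moreover have "(1+\<delta>)*(t'-t) \<le> 8/7*(t'-t)" using d1 \<open>t \<le> t'\<close> by (intro mult_right_mono) auto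
  ultimately show ?thesis by linarith
qed

lemma smono: "t < t' \<Longrightarrow> C t < C t'"
  using lower[of t t'] by simp

lemma cmono: "t \<le> t' \<Longrightarrow> C t \<le> C t'"
  using lower[of t t'] by simp

lemma cont: "continuous_on UNIV C"
  unfolding continuous_on_iff
proof (intro ballI allI impI)
  fix x e :: real assume e: "0 < e"
  show "\<exists>d>0. \<forall>x'\<in>UNIV. dist x' x < d \<longrightarrow> dist (C x') (C x) < e"
  proof (intro exI[of _ "e/2"] conjI ballI impI)
    fix x' assume h: "dist x' x < e/2"
    show "dist (C x') (C x) < e"
    proof (cases "x \<le> x'")
      case True
      then show ?thesis using upper[of x x'] lower[of x x'] h e by (simp add: dist_real_def)
    next
      case False
      then show ?thesis using upper[of x' x] lower[of x' x] h e by (simp add: dist_real_def)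
    qed
  qed (use e in auto)
qed

lemma surj: "\<exists>t. C t = c"
proof (cases "C 0 \<le> c")
  case True
  define t1 where "t1 = 7/6*(c - C 0)"
  have "0 \<le> t1" using True t1_def by simp
  have "6/7*(t1-0) = c - C 0" using t1_def by simp
  then have "c \<le> C t1" using lower[OF \<open>0 \<le> t1\<close>] by linarith
  then obtain t where "C t = c" using IVT'[of C 0 c t1] True \<open>0 \<le> t1\<close>
      continuous_on_subset[OF cont] by blast
  then show ?thesis by blast
next
  case False
  define t1 where "t1 = - 7/6*(C 0 - c)"
  have "t1 \<le> 0" using False t1_def by simp
  have "6/7*(0-t1) = C 0 - c" using t1_def by simp
  then have "C t1 \<le> c" using lower[OF \<open>t1 \<le> 0\<close>] by linarith
  then obtain t where "C t = c" using IVT'[of C t1 c 0] False \<open>t1 \<le> 0\<close>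
      continuous_on_subset[OF cont] by fastforce
  then show ?thesis by blast
qed

lemma Ctau: "C (tau C c) = c"
  unfolding tau_def using surj[of c] by (rule someI_ex)

lemma le_iff: "c \<le> C t \<longleftrightarrow> tau C c \<le> t"
  by (metis Ctau cmono not_le smono)

lemma less_iff: "C t < c \<longleftrightarrow> t < tau C c"
  using le_iff by (meson not_le)

lemma tauC: "tau C (C t) = t"
  using Ctau[of "C t"] smono by (metis linorder_neqE_linordered_idom less_irrefl)

lemma interval: "{t. a \<le> C t \<and> C t < b} = {t. tau C a \<le> t \<and> t < tau C b}"
  using le_iff less_iff by auto

lemma tau_bounds:
  assumes "c \<le> c'"
  shows "7/8*(c'-c) \<le> tau C c' - tau C c \<and> tau C c' - tau C c \<le> 7/6*(c'-c)"
proof -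
  have le: "tau C c \<le> tau C c'" using assms le_iff Ctau by metis
  have "6/7*(tau C c' - tau C c) \<le> c' - c" using lower[OF le] Ctau by simp
  moreover have "c' - c \<le> 8/7*(tau C c' - tau C c)" using upper[OF le] Ctau by simp
  moreover have X: "\<And>D E::real. 6/7*D \<le> E \<Longrightarrow> E \<le> 8/7*D \<Longrightarrow> 7/8*E \<le> D \<and> D \<le> 7/6*E" by linarith
  ultimately show ?thesis by blast
qed

lemma frame_eq: "frame C s L k = {t. tau C (C s + real k * L) \<le> t \<and> t < tau C (C s + (real k + 1) * L)}"
  unfolding frame_def using interval by simp

lemma slot_eq: "slot C s L k j = {t. tau C (C s + real k * L + real j * L / 3) \<le> t \<and>
    t < tau C (C s + real k * L + (real j + 1) * L / 3)}"
  unfolding slot_def using interval by simp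

lemma full_iff:
  assumes L: "0 < L"
  shows "full_frame_after C s L T k \<longleftrightarrow> T \<le> tau C (C s + real k * L)"
proof -
  have "tau C (C s + real k * L) < tau C (C s + (real k + 1) * L)"
    using tau_bounds[of "C s + real k * L" "C s + (real k + 1) * L"] L by (simp add: algebra_simps)
  then show ?thesis unfolding full_frame_after_def frame_eq by force
qed

lemma first_full_props:
  assumes L: "0 < L" and sT: "s \<le> T"
  shows "T \<le> tau C (C s + real (first_full C s L T) * L) \<and>
         tau C (C s + real (first_full C s L T) * L) < T + 7/6*L"
proof -
  obtain n :: nat where n: "(T - s) / (7/8*L) < real n" using reals_Archimedean2 by blast
  have "T - s < real n * (7/8*L)" using n L by (simp add: field_simps)
  moreover have "7/8*(real n * L) \<le> tau C (C s + real n * L) - s"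
    using tau_bounds[of "C s" "C s + real n * L"] L tauC by simp
  ultimately have ex: "full_frame_after C s L T n" using full_iff[OF L] by (simp add: algebra_simps)
  define k where "k = first_full C s L T"
  have k: "full_frame_after C s L T k" unfolding k_def first_full_def by (rule LeastI[of "full_frame_after C s L T" n, OF ex])
  have A: "T \<le> tau C (C s + real k * L)" using k full_iff[OF L] by simp
  have B: "tau C (C s + real k * L) < T + 7/6*L"
  proof (cases k)
    case 0
    then show ?thesis using A sT tauC L by simp
  next
    case (Suc m)
    have "\<not> full_frame_after C s L T m" unfolding first_full_def
      using not_less_Least[of m "full_frame_after C s L T"] Suc k_def first_full_def by simp
    then have "tau C (C s + real m * L) < T" using full_iff[OF L] by simp
    moreover have "tau C (C s + real k * L) - tau C (C s + real m * L) \<le> 7/6*L"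
      using tau_bounds[of "C s + real m * L" "C s + real k * L"] L Suc by (simp add: algebra_simps)
    ultimately show ?thesis by linarith
  qed
  show ?thesis using A B k_def by simp
qed

end

theorem mainTheorem4:
  fixes C :: "'node \<Rightarrow> real \<Rightarrow> real" and start :: "'node \<Rightarrow> real"
    and \<delta> L T Ts :: real and v u :: 'node
  assumes "0 \<le> \<delta>" and "\<delta> \<le> 1/7" and "0 < L"
    and "\<And>w. drift_clock \<delta> (C w)"
    and "\<And>w. start w \<le> Ts"
    and "Ts \<le> T"
  shows "\<exists>a\<in>{0,1}. \<exists>b\<in>{0,1}.
           aligned (C v) (start v) (first_full (C v) (start v) L T + a)
                   (C u) (start u) (first_full (C u) (start u) L T + b) L"
proof -
  interpret V: clk \<delta> "C v" using assms by unfold_locales auto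
  interpret U: clk \<delta> "C u" using assms by unfold_locales auto
  define kv where "kv = first_full (C v) (start v) L T"
  define ku where "ku = first_full (C u) (start u) L T"
  define P where "P x = tau (C v) (C v (start v) + real kv * L + x)" for x
  define Q where "Q x = tau (C u) (C u (start u) + real ku * L + x)" for x
  have svT: "start v \<le> T" "start u \<le> T" using assms(5)[of v] assms(5)[of u] assms(6) by auto
  have bP: "\<And>x y. x \<le> y \<Longrightarrow> 7/8*(y-x) \<le> P y - P x \<and> P y - P x \<le> 7/6*(y-x)"
  proof -
    fix x y :: real assume "x \<le> y"
    then show "7/8*(y-x) \<le> P y - P x \<and> P y - P x \<le> 7/6*(y-x)"
      unfolding P_def using V.tau_bounds[of "C v (start v) + real kv * L + x" "C v (start v) + real kv * L + y"] by simp
  qed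
  have bQ: "\<And>x y. x \<le> y \<Longrightarrow> 7/8*(y-x) \<le> Q y - Q x \<and> Q y - Q x \<le> 7/6*(y-x)"
  proof -
    fix x y :: real assume "x \<le> y"
    then show "7/8*(y-x) \<le> Q y - Q x \<and> Q y - Q x \<le> 7/6*(y-x)"
      unfolding Q_def using U.tau_bounds[of "C u (start u) + real ku * L + x" "C u (start u) + real ku * L + y"] by simp
  qed
  have P0: "T \<le> P 0" "P 0 < T + 7/6*L"
    using V.first_full_props[OF assms(3) svT(1)] unfolding P_def kv_def by auto
  have Q0: "T \<le> Q 0" "Q 0 < T + 7/6*L"
    using U.first_full_props[OF assms(3) svT(2)] unfolding Q_def ku_def by auto
  obtain a b j where ab: "a \<in> {0::nat,1}" "b \<in> {0::nat,1}" "j < (3::nat)"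
    and h1: "Q (real b*L) \<le> P (real a*L + real j*L/3)"
    and h2: "P (real a*L + (real j+1)*L/3) \<le> Q (real b*L + L)"
    using pure[OF assms(3) bP bQ P0 Q0] by blast
  have "slot (C v) (start v) L (kv + a) j \<subseteq> frame (C u) (start u) L (ku + b)"
  proof -
    have e1: "C v (start v) + real (kv + a) * L + real j * L / 3 = C v (start v) + real kv * L + (real a*L + real j*L/3)"
      by (simp add: algebra_simps)
    have e2: "C v (start v) + real (kv + a) * L + (real j + 1) * L / 3 = C v (start v) + real kv * L + (real a*L + (real j+1)*L/3)"
      by (simp add: algebra_simps)
    have e3: "C u (start u) + real (ku + b) * L = C u (start u) + real ku * L + real b * L"
      by (simp add: algebra_simps)
    have e4: "C u (start u) + (real (ku + b) + 1) * L = C u (start u) + real ku * L + (real b * L + L)"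
      by (simp add: algebra_simps)
    show ?thesis unfolding V.slot_eq U.frame_eq e1 e2 e3 e4
      using h1 h2 unfolding P_def Q_def by auto
  qed
  then have "aligned (C v) (start v) (kv + a) (C u) (start u) (ku + b) L"
    unfolding aligned_def using ab(3) by blast
  then show ?thesis using ab unfolding kv_def ku_def by blast
qed

end
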